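(* Assume the standing assumptions and let $f$ satisfy (F); let $g$, $b_g$, $\gamma_g$ be as below. Then the problem $$\partial_t\tilde s=\Delta_h\tilde s+b_g\big[D^+_hg\,D^+_h\tilde s+D^-_hg\,D^-_h\tilde s\big]+\gamma_g\,\tilde s\,(Bf-1)\ \text{ on }(0,T]\times\Omega_h^+,$$ $$\tilde s(0,x)=s_0(x)\ (x\in\Omega_h^+),\qquad \tilde s(t,0)=\psi(t)\ (t\in[0,T]),$$ has a unique bounded solution $\tilde s$, and $0\le\tilde s(t,x)\le\eta$ for all $(t,x)\in[0,T]\times\Omega_h^+$.
   Context: Discrete setting: $h>0$, $\Omega_h^+=\{h,2h,\dots\}$, $\Omega_{h,0}^+=\Omega_h^+\cup\{0\}$, $\|f\|_{L^p(\Omega_h^+)}=(h\sum_{z\in\Omega_h^+}|f(z)|^p)^{1/p}$, $D^+_hf(x)=\frac{f(x+h)-f(x)}{h}$, $D^-_hf(x)=\frac{f(x)-f(x-h)}{h}$, $\Delta_hf(x)=\frac{f(x+h)-2f(x)+f(x-h)}{h^2}$. Standing assumptions: $A=1$, $B\in\{-1,1\}$, $\varphi(c)=A+Bc$, $\lambda>0$, $T>0$, $\eta>0$; $\psi\in C^\beta([0,T])$ for some $\beta\in(1/4,1/2)$ with $0\le\psi\le\eta$, $\psi(0)=0$; $s_0:\Omega_{h,0}^+\to\mathbb{R}$ with $0\le s_0\le\eta$, $s_0(0)=0$, $s_0,D^+_hs_0\in L^2(\Omega_h^+)$; $c_0:\Omega_{h,0}^+\to\mathbb{R}$ with $0<c_m\le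 c_0\le C_0$ and $C_0-c_0,\ D^+_hc_0\in L^2(\Omega_h^+)$; there are constants $0<\varphi_{\min}\le\varphi_{\max}$ with $\varphi_{\min}\le\varphi(c)\le\varphi_{\max}$ for all $c\in[0,C_0]$; if $B=1$ then $\eta<1$. Conditions (F) on a Borel $f:[0,T]\times\Omega_{h,0}^+\to\mathbb{R}$, for some $K>0$: $f\in C([0,T],L^2(\Omega_h^+))$, $\sup_t\|f(t)\|^2_{L^2}+\int_0^T\|D^+_hf(t)\|^2_{L^2}dt\le K$, $f\ge0$, $f(t,0)=\psi(t)$, $0\le f\le\eta$. Linearized coefficients: $g(t,x)=Ac_0(x)[\varphi(c_0(x))e^{\lambda A\int_0^tf(\tau,x)d\tau}-Bc_0(x)]^{-1}$, $b_g=\frac{B}{2(A+Bg)}$, $\gamma_g=\lambda g$. *)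

theory Defs
  imports "HOL-Analysis.Analysis"
begin

text \<open>Grid functions on \<Omega>_{h,0}^+ = {0,h,2h,...} are represented as functions
  nat \<Rightarrow> real, index k standing for the grid point x = k*h.
  \<Omega>_h^+ corresponds to indices k \<ge> 1.\<close>

definition Dp :: "real \<Rightarrow> (nat \<Rightarrow> real) \<Rightarrow> nat \<Rightarrow> real" where
  "Dp h u k = (u (k+1) - u k) / h"

definition Dm :: "real \<Rightarrow> (nat \<Rightarrow> real) \<Rightarrow> nat \<Rightarrow> real" where
  "Dm h u k = (u k - u (k-1)) / h"

definition Lap :: "real \<Rightarrow> (nat \<Rightarrow> real) \<Rightarrow> nat \<Rightarrow> real" where
  "Lap h u k = (u (k+1) - 2 * u k + u (k-1)) / h^2"

definition in_L2 :: "(nat \<Rightarrow> real) \<Rightarrow> bool" where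
  "in_L2 u \<longleftrightarrow> summable (\<lambda>k. (u (Suc k))\<^sup>2)"

definition L2norm :: "real \<Rightarrow> (nat \<Rightarrow> real) \<Rightarrow> real" where
  "L2norm h u = sqrt (h * (\<Sum>k. (u (Suc k))\<^sup>2))"

text \<open>Squared L^2 norm valued in extended nonnegative reals (infinite if u \<notin> L^2).\<close>
definition L2sq_e :: "real \<Rightarrow> (nat \<Rightarrow> real) \<Rightarrow> ennreal" where
  "L2sq_e h u = ennreal h * (\<Sum>k. ennreal ((u (Suc k))\<^sup>2))"

definition holder_on :: "real \<Rightarrow> real set \<Rightarrow> (real \<Rightarrow> real) \<Rightarrow> bool" where
  "holder_on \<beta> S p \<longleftrightarrow> (\<exists>C. \<forall>t\<in>S. \<forall>s\<in>S. \<bar>p t - p s\<bar> \<le> C * \<bar>t - s\<bar> powr \<beta>)"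

definition phi :: "real \<Rightarrow> real \<Rightarrow> real \<Rightarrow> real" where
  "phi A B c = A + B * c"

definition lin_g :: "real \<Rightarrow> real \<Rightarrow> real \<Rightarrow> (nat \<Rightarrow> real) \<Rightarrow> (real \<Rightarrow> nat \<Rightarrow> real) \<Rightarrow> real \<Rightarrow> nat \<Rightarrow> real" where
  "lin_g A B lam c0 f t k =
     A * c0 k / (phi A B (c0 k) * exp (lam * A * integral {0..t} (\<lambda>\<tau>. f \<tau> k)) - B * c0 k)"

definition b_coef :: "real \<Rightarrow> real \<Rightarrow> real \<Rightarrow> real" where
  "b_coef A B gv = B / (2 * (A + B * gv))"

definition gamma_coef :: "real \<Rightarrow> real \<Rightarrow> real" where
  "gamma_coef lam gv = lam * gv"

definition cond_F :: "real \<Rightarrow> real \<Rightarrow> real \<Rightarrow> (real \<Rightarrow> real) \<Rightarrow> real \<Rightarrow> (real \<Rightarrow> nat \<Rightarrow> real) \<Rightarrow> bool" where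
  "cond_F h T \<eta> \<psi> K f \<longleftrightarrow>
     (\<forall>k. (\<lambda>t. f t k) \<in> borel_measurable (restrict_space borel {0..T})) \<and>
     (\<forall>t\<in>{0..T}. in_L2 (f t)) \<and>
     (\<forall>t\<in>{0..T}. ((\<lambda>\<tau>. L2norm h (\<lambda>k. f \<tau> k - f t k)) \<longlongrightarrow> 0) (at t within {0..T})) \<and>
     (SUP t\<in>{0..T}. L2sq_e h (f t)) + (\<integral>\<^sup>+ t\<in>{0..T}. L2sq_e h (Dp h (f t)) \<partial>lborel) \<le> ennreal K \<and>
     (\<forall>t\<in>{0..T}. \<forall>k. 0 \<le> f t k) \<and>
     (\<forall>t\<in>{0..T}. f t 0 = \<psi> t) \<and>
     (\<forall>t\<in>{0..T}. \<forall>k. f t k \<le> \<eta>)"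

definition is_lin_solution ::
  "real \<Rightarrow> real \<Rightarrow> real \<Rightarrow> real \<Rightarrow> real \<Rightarrow> (real \<Rightarrow> real) \<Rightarrow> (nat \<Rightarrow> real) \<Rightarrow> (nat \<Rightarrow> real)
   \<Rightarrow> (real \<Rightarrow> nat \<Rightarrow> real) \<Rightarrow> (real \<Rightarrow> nat \<Rightarrow> real) \<Rightarrow> bool" where
  "is_lin_solution h A B lam T \<psi> s0 c0 f s \<longleftrightarrow>
     (\<forall>k\<ge>1. continuous_on {0..T} (\<lambda>t. s t k)) \<and>
     (\<forall>k\<ge>1. \<forall>t\<in>{0<..T}.
        ((\<lambda>\<tau>. s \<tau> k) has_real_derivative
           (Lap h (s t) k
            + b_coef A B (lin_g A B lam c0 f t k)
                * (Dp h (lin_g A B lam c0 f t) k * Dp h (s t) k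
                   + Dm h (lin_g A B lam c0 f t) k * Dm h (s t) k)
            + gamma_coef lam (lin_g A B lam c0 f t k) * s t k * (B * f t k - 1)))
        (at t within {0..T})) \<and>
     (\<forall>k\<ge>1. s 0 k = s0 k) \<and>
     (\<forall>t\<in>{0..T}. s t 0 = \<psi> t)"

definition bounded_on_T :: "real \<Rightarrow> (real \<Rightarrow> nat \<Rightarrow> real) \<Rightarrow> bool" where
  "bounded_on_T T s \<longleftrightarrow> (\<exists>M. \<forall>t\<in>{0..T}. \<forall>k. \<bar>s t k\<bar> \<le> M)"

end

theory Submission
  imports Defs "HOL-Analysis.Analysis"
begin

lemma g_facts:
  fixes c E B p :: real
  assumes c: "0 < c" and E: "1 \<le> E" and B: "B = 1 \<or> (B = -1 \<and> p \<le> 1 - c)" and p: "0 < p" "p \<le> 1"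
  shows "0 < c / ((1 + B*c)*E - B*c)" "c / ((1 + B*c)*E - B*c) \<le> c"
    "p \<le> 1 + B * (c / ((1 + B*c)*E - B*c))" "1 \<le> (1 + B*c)*E - B*c"
proof -
  have d: "1 \<le> (1 + B*c)*E - B*c"
  proof (cases "B = 1")
    case True
    have "0 \<le> (1+c)*(E-1)" using c E by simp
    then show ?thesis using True by (simp add: algebra_simps)
  next
    case False
    with B have B': "B = -1" "p \<le> 1 - c" by auto
    have "0 \<le> (1-c)*(E-1)" using B' p E by simp
    then show ?thesis using B' by (simp add: algebra_simps)
  qed
  then show "1 \<le> (1 + B*c)*E - B*c" .
  show "0 < c / ((1 + B*c)*E - B*c)" using d c by simp
  show le: "c / ((1 + B*c)*E - B*c) \<le> c" using d c by (simp add: divide_le_eq)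
  show "p \<le> 1 + B * (c / ((1 + B*c)*E - B*c))"
  proof (cases "B = 1")
    case True
    then show ?thesis using \<open>0 < c / ((1 + B*c)*E - B*c)\<close> p by simp
  next
    case False
    with B have B': "B = -1" "p \<le> 1 - c" by auto
    then show ?thesis using le by simp
  qed
qed

lemma coef_facts:
  fixes h B p C0 gm g gp :: real
  assumes h: "0 < h" and B: "B = 1 \<or> B = -1" and p: "0 < p"
    and gm: "0 \<le> gm" "gm \<le> C0" "p \<le> 1 + B*gm"
    and g: "0 \<le> g" "g \<le> C0" "p \<le> 1 + B*g"
    and gp: "0 \<le> gp" "gp \<le> C0" "p \<le> 1 + B*gp"
  shows "0 \<le> 1/h^2 - B/(2*(1+B*g)) * ((g - gm)/h) / h"
    "0 \<le> 1/h^2 + B/(2*(1+B*g)) * ((gp - g)/h) / h"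
    "1/h^2 - B/(2*(1+B*g)) * ((g - gm)/h) / h \<le> (1 + C0/(2*p))/h^2"
    "1/h^2 + B/(2*(1+B*g)) * ((gp - g)/h) / h \<le> (1 + C0/(2*p))/h^2"
    "\<bar>B/(2*(1+B*g)) * ((g - gm)/h) / h\<bar> \<le> (C0/(2*p))/h^2"
    "\<bar>B/(2*(1+B*g)) * ((gp - g)/h) / h\<bar> \<le> (C0/(2*p))/h^2"
proof -
  have hh: "B/(2*(1+B*g)) * ((g - gm)/h) / h = (B*(g-gm)/(2*(1+B*g)))/h^2"
    "B/(2*(1+B*g)) * ((gp - g)/h) / h = (B*(gp-g)/(2*(1+B*g)))/h^2"
    using h by (simp_all add: power2_eq_square field_simps)
  have den: "0 < 2*(1+B*g)" using p g by simp
  have a1: "B*(g-gm)/(2*(1+B*g)) \<le> 1"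
    using B den gm g p by (auto simp: divide_le_eq)
  have a2: "-1 \<le> B*(gp-g)/(2*(1+B*g))"
    using B den gp g p by (auto simp: le_divide_eq)
  have b1: "\<bar>B*(g-gm)/(2*(1+B*g))\<bar> \<le> C0/(2*p)"
  proof -
    have "\<bar>B*(g-gm)\<bar> \<le> C0" using B gm g by auto
    moreover have "2*p \<le> \<bar>2*(1+B*g)\<bar>" using den g by simp
    ultimately show ?thesis using p den
      by (simp add: abs_divide frac_le)
  qed
  have b2: "\<bar>B*(gp-g)/(2*(1+B*g))\<bar> \<le> C0/(2*p)"
  proof -
    have "\<bar>B*(gp-g)\<bar> \<le> C0" using B gp g by auto
    moreover have "2*p \<le> \<bar>2*(1+B*g)\<bar>" using den g by simp
    ultimately show ?thesis using p den
      by (simp add: abs_divide frac_le)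
  qed
  have hp: "0 < h^2" using h by simp
  define X1 where "X1 = B*(g-gm)/(2*(1+B*g))"
  define X2 where "X2 = B*(gp-g)/(2*(1+B*g))"
  have e1: "1/h^2 - X1/h^2 = (1 - X1)/h^2" "1/h^2 + X2/h^2 = (1 + X2)/h^2"
    by (simp_all add: diff_divide_distrib add_divide_distrib)
  have e2: "(1 + C0/(2*p))/h^2 = 1/h^2 + (C0/(2*p))/h^2"
    by (simp add: add_divide_distrib)
  have X1: "X1 \<le> 1" "\<bar>X1\<bar> \<le> C0/(2*p)" using a1 b1 X1_def by auto
  have X2: "-1 \<le> X2" "\<bar>X2\<bar> \<le> C0/(2*p)" using a2 b2 X2_def by auto
  have d1: "\<bar>X1/h^2\<bar> \<le> (C0/(2*p))/h^2" using divide_right_mono[OF X1(2), of "h^2"] hp by (simp add: abs_divide)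
  have d2: "\<bar>X2/h^2\<bar> \<le> (C0/(2*p))/h^2" using divide_right_mono[OF X2(2), of "h^2"] hp by (simp add: abs_divide)
  show "0 \<le> 1/h^2 - B/(2*(1+B*g)) * ((g - gm)/h) / h"
    unfolding hh X1_def[symmetric] e1 using X1 hp by simp
  show "0 \<le> 1/h^2 + B/(2*(1+B*g)) * ((gp - g)/h) / h"
    unfolding hh X2_def[symmetric] e1 using X2 hp by simp
  show "1/h^2 - B/(2*(1+B*g)) * ((g - gm)/h) / h \<le> (1 + C0/(2*p))/h^2"
    unfolding hh X1_def[symmetric] e2 using d1 by linarith
  show "1/h^2 + B/(2*(1+B*g)) * ((gp - g)/h) / h \<le> (1 + C0/(2*p))/h^2"
    unfolding hh X2_def[symmetric] e2 using d2 by linarith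
  show "\<bar>B/(2*(1+B*g)) * ((g - gm)/h) / h\<bar> \<le> (C0/(2*p))/h^2"
    unfolding hh X1_def[symmetric] using d1 .
  show "\<bar>B/(2*(1+B*g)) * ((gp - g)/h) / h\<bar> \<le> (C0/(2*p))/h^2"
    unfolding hh X2_def[symmetric] using d2 .
qed



locale lsetup =
  fixes h B lam T \<eta> p C0 :: real and \<psi> :: "real \<Rightarrow> real" and s0 c0 :: "nat \<Rightarrow> real"
    and f :: "real \<Rightarrow> nat \<Rightarrow> real"
  assumes h: "0 < h" and B: "B = 1 \<or> B = -1" and lam: "0 < lam" and T: "0 < T" and eta: "0 < \<eta>"
    and p: "0 < p" "p \<le> 1"
    and psi_cont: "continuous_on {0..T} \<psi>"
    and psi_bds: "\<And>t. t \<in> {0..T} \<Longrightarrow> 0 \<le> \<psi> t \<and> \<psi> t \<le> \<eta>"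
    and s0_bds: "\<And>k. 0 \<le> s0 k \<and> s0 k \<le> \<eta>"
    and c0_bds: "\<And>k. 0 < c0 k \<and> c0 k \<le> C0"
    and c0_phi: "\<And>k. B = -1 \<Longrightarrow> p \<le> 1 - c0 k"
    and eta_lt: "B = 1 \<Longrightarrow> \<eta> < 1"
    and f_cont: "\<And>k. continuous_on {0..T} (\<lambda>t. f t k)"
    and f_bds: "\<And>t k. t \<in> {0..T} \<Longrightarrow> 0 \<le> f t k \<and> f t k \<le> \<eta>"
    and f0: "\<And>t. t \<in> {0..T} \<Longrightarrow> f t 0 = \<psi> t"
begin

definition "G t k = lin_g 1 B lam c0 f t k"
definition "bb t k = b_coef 1 B (G t k)"
definition "al t k = 1/h^2 - bb t k * Dm h (G t) k / h"
definition "ga t k = 1/h^2 + bb t k * Dp h (G t) k / h"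
definition "be t k = -2/h^2 - bb t k * Dp h (G t) k / h + bb t k * Dm h (G t) k / h
   + lam * G t k * (B * f t k - 1)"
definition "Lam = (2 + C0/p)/h^2 + lam * C0 * (\<eta> + 1) + 1"

lemma rhs_eq:
  "Lap h u k + bb t k * (Dp h (G t) k * Dp h u k + Dm h (G t) k * Dm h u k)
     + gamma_coef lam (G t k) * u k * (B * f t k - 1)
   = al t k * u (k-1) + be t k * u k + ga t k * u (k+1)"
  using h unfolding al_def be_def ga_def Lap_def Dp_def Dm_def gamma_coef_def
  by (simp add: field_simps power2_eq_square)

lemma sum_coef: "al t k + be t k + ga t k = lam * G t k * (B * f t k - 1)"
  unfolding al_def be_def ga_def by simp

lemma f_int: "(\<lambda>\<tau>. f \<tau> k) integrable_on {0..t}" if "t \<le> T"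
proof (cases "0 \<le> t")
  case True
  then show ?thesis
    using integrable_continuous_interval[OF continuous_on_subset[OF f_cont]] that by auto
next
  case False
  then show ?thesis by (simp add: integrable_on_empty)
qed

lemma I_nonneg: "t \<le> T \<Longrightarrow> 0 \<le> integral {0..t} (\<lambda>\<tau>. f \<tau> k)"
  by (rule integral_nonneg[OF f_int]) (use f_bds in auto)

lemma G_eq: "G t k = c0 k / ((1 + B * c0 k) * exp (lam * integral {0..t} (\<lambda>\<tau>. f \<tau> k)) - B * c0 k)"
  unfolding G_def lin_g_def phi_def by simp

lemma G_facts:
  assumes "t \<le> T"
  shows "0 < G t k" "G t k \<le> C0" "p \<le> 1 + B * G t k"
    "1 \<le> (1 + B * c0 k) * exp (lam * integral {0..t} (\<lambda>\<tau>. f \<tau> k)) - B * c0 k"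
proof -
  have E: "1 \<le> exp (lam * integral {0..t} (\<lambda>\<tau>. f \<tau> k))"
    using I_nonneg[OF assms] lam by simp
  have BB: "B = 1 \<or> (B = -1 \<and> p \<le> 1 - c0 k)" using B c0_phi by auto
  note gf = g_facts[OF conjunct1[OF c0_bds] E BB p]
  show "0 < G t k" "p \<le> 1 + B * G t k" using gf unfolding G_eq by auto
  show "G t k \<le> C0" using gf(2) c0_bds[of k] unfolding G_eq by linarith
  show "1 \<le> (1 + B * c0 k) * exp (lam * integral {0..t} (\<lambda>\<tau>. f \<tau> k)) - B * c0 k"
    using gf by auto
qed

lemma coef_bds:
  assumes tT: "t \<in> {0..T}"
  shows "0 \<le> al t k" "0 \<le> ga t k" "al t k \<le> Lam" "ga t k \<le> Lam" "\<bar>be t k\<bar> \<le> Lam"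
proof -
  have assms: "t \<le> T" using tT by auto
  have gm: "0 \<le> G t (k-1)" "G t (k-1) \<le> C0" "p \<le> 1 + B*G t (k-1)"
    using G_facts[OF assms, of "k-1"] by auto
  have g: "0 \<le> G t k" "G t k \<le> C0" "p \<le> 1 + B*G t k"
    using G_facts[OF assms, of "k"] by auto
  have gp: "0 \<le> G t (k+1)" "G t (k+1) \<le> C0" "p \<le> 1 + B*G t (k+1)"
    using G_facts[OF assms, of "k+1"] by auto
  note cf = coef_facts[OF h B p(1) gm g gp]
  have alx: "al t k = 1/h^2 - B/(2*(1+B*G t k)) * ((G t k - G t (k-1))/h) / h"
    unfolding al_def bb_def b_coef_def Dm_def by simp
  have gax: "ga t k = 1/h^2 + B/(2*(1+B*G t k)) * ((G t (k+1) - G t k)/h) / h"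
    unfolding ga_def bb_def b_coef_def Dp_def by simp
  have bex: "be t k = -2/h^2 - B/(2*(1+B*G t k)) * ((G t (k+1) - G t k)/h) / h
     + B/(2*(1+B*G t k)) * ((G t k - G t (k-1))/h) / h + lam * G t k * (B * f t k - 1)"
    unfolding be_def bb_def b_coef_def Dp_def Dm_def by simp
  have C0: "0 \<le> C0" using c0_bds[of 0] by simp
  have hp: "0 < h^2" using h by simp
  have l1: "(1 + C0/(2*p))/h^2 \<le> Lam"
  proof -
    have "(1 + C0/(2*p))/h^2 \<le> (2 + C0/p)/h^2"
      using C0 p hp by (intro divide_right_mono) (auto simp: field_simps)
    moreover have "0 \<le> lam * C0 * (\<eta> + 1)" using lam C0 eta by simp
    ultimately show ?thesis unfolding Lam_def by linarith
  qed
  show "0 \<le> al t k" "0 \<le> ga t k" "al t k \<le> Lam" "ga t k \<le> Lam"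
    using cf l1 unfolding alx gax by linarith+
  have fb: "\<bar>B * f t k - 1\<bar> \<le> \<eta> + 1"
  proof -
    from f_bds[OF tT, of k] have "0 \<le> f t k" "f t k \<le> \<eta>" by auto
    then show ?thesis using B by auto
  qed
  have lb: "\<bar>lam * G t k * (B * f t k - 1)\<bar> \<le> lam * C0 * (\<eta> + 1)"
  proof -
    have "\<bar>lam * G t k * (B * f t k - 1)\<bar> = lam * G t k * \<bar>B * f t k - 1\<bar>"
      using lam g by (simp add: abs_mult)
    also have "\<dots> \<le> lam * C0 * (\<eta> + 1)"
      using lam g fb by (intro mult_mono) auto
    finally show ?thesis .
  qed
  have "(2 + C0/p)/h^2 = 2/h^2 + (C0/(2*p))/h^2 + (C0/(2*p))/h^2"
    using p h by (simp add: field_simps)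
  moreover have "-2/h^2 = -(2/h^2)" "0 \<le> 2/h^2" by auto
  ultimately show "\<bar>be t k\<bar> \<le> Lam" unfolding bex Lam_def using cf(5,6) lb
    by (simp only: abs_le_iff) linarith
qed

end


context lsetup begin

lemma G_cont: "continuous_on {0..T} (\<lambda>t. G t k)"
proof -
  have ic: "continuous_on {0..T} (\<lambda>t. integral {0..t} (\<lambda>\<tau>. f \<tau> k))"
    by (rule indefinite_integral_continuous_1[OF f_int]) simp
  have "continuous_on {0..T} (\<lambda>t. c0 k / ((1 + B * c0 k) * exp (lam * integral {0..t} (\<lambda>\<tau>. f \<tau> k)) - B * c0 k))"
    apply (intro continuous_intros ic)
    using G_facts(4) by (metis atLeastAtMost_iff not_one_le_zero)
  then show ?thesis unfolding G_eq .
qed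

lemma bb_cont: "continuous_on {0..T} (\<lambda>t. bb t k)"
  unfolding bb_def b_coef_def
  apply (intro continuous_intros G_cont)
  using G_facts(3) p by (metis atLeastAtMost_iff mult_1 add.commute linorder_not_le mult_eq_0_iff
        zero_neq_numeral)

lemma al_cont: "continuous_on {0..T} (\<lambda>t. al t k)"
  unfolding al_def Dm_def by (intro continuous_intros G_cont bb_cont) (use h in auto)

lemma ga_cont: "continuous_on {0..T} (\<lambda>t. ga t k)"
  unfolding ga_def Dp_def by (intro continuous_intros G_cont bb_cont) (use h in auto)

lemma be_cont: "continuous_on {0..T} (\<lambda>t. be t k)"
  unfolding be_def Dp_def Dm_def by (intro continuous_intros G_cont bb_cont f_cont) (use h in auto)

definition "P t u k = al t k * u (k-1) + (be t k + Lam) * u k + ga t k * u (k+1)"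

lemma P_cont:
  assumes "\<And>j. continuous_on {0..T} (\<lambda>t. u t j)"
  shows "continuous_on {0..T} (\<lambda>t. P t (u t) k)"
  unfolding P_def by (intro continuous_intros al_cont be_cont ga_cont assms)

lemma sum_nonpos: "t \<in> {0..T} \<Longrightarrow> al t k + be t k + ga t k \<le> 0"
proof -
  assume tT: "t \<in> {0..T}"
  have "0 < G t k" using G_facts tT by auto
  moreover have "B * f t k - 1 \<le> 0" using B f_bds[OF tT, of k] eta_lt by auto
  ultimately show ?thesis unfolding sum_coef using lam
    by (simp add: mult_nonneg_nonpos)
qed

lemma P_bds:
  assumes tT: "t \<in> {0..T}" and u: "\<And>j. 0 \<le> u j \<and> u j \<le> M"
  shows "0 \<le> P t u k" "P t u k \<le> Lam * M"
proof -
  note cb = coef_bds[OF tT, of k]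
  have bl: "0 \<le> be t k + Lam" using cb by linarith
  have "0 \<le> al t k * u (k-1)" "0 \<le> (be t k + Lam) * u k" "0 \<le> ga t k * u (k+1)"
    using cb bl u by auto
  then show "0 \<le> P t u k" unfolding P_def by linarith
  have "P t u k \<le> al t k * M + (be t k + Lam) * M + ga t k * M"
    unfolding P_def using cb bl u by (intro add_mono mult_left_mono) auto
  also have "\<dots> = (al t k + be t k + ga t k) * M + Lam * M" by (simp add: algebra_simps)
  also have "\<dots> \<le> Lam * M"
    using sum_nonpos[OF tT, of k] u[of 0] by (simp add: mult_nonpos_nonneg)
  finally show "P t u k \<le> Lam * M" .
qed

lemma P_mono:
  assumes tT: "t \<in> {0..T}" and u: "\<And>j. u j \<le> w j"
  shows "P t u k \<le> P t w k"
proof -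
  note cb = coef_bds[OF tT, of k]
  have bl: "0 \<le> be t k + Lam" using cb by linarith
  show ?thesis unfolding P_def using cb bl u by (intro add_mono mult_left_mono) auto
qed

lemma Lam_pos: "0 < Lam"
proof -
  have "0 \<le> C0" using c0_bds[of 0] by simp
  then have "0 \<le> (2 + C0/p)/h^2" "0 \<le> lam * C0 * (\<eta> + 1)" using p lam eta by auto
  then show ?thesis unfolding Lam_def by linarith
qed

lemma exp_int:
  assumes "0 \<le> t"
  shows "((\<lambda>\<tau>. Lam * \<eta> * exp (Lam * \<tau>)) has_integral (\<eta> * exp (Lam * t) - \<eta>)) {0..t}"
proof -
  have "((\<lambda>\<tau>. Lam * \<eta> * exp (Lam * \<tau>)) has_integral (\<eta> * exp (Lam * t) - \<eta> * exp (Lam * 0))) {0..t}"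
  proof (rule fundamental_theorem_of_calculus[OF assms])
    fix x assume "x \<in> {0..t}"
    show "((\<lambda>\<tau>. \<eta> * exp (Lam * \<tau>)) has_vector_derivative Lam * \<eta> * exp (Lam * x)) (at x within {0..t})"
      unfolding has_real_derivative_iff_has_vector_derivative[symmetric]
      by (auto intro!: derivative_eq_intros)
  qed
  then show ?thesis by simp
qed

primrec V :: "nat \<Rightarrow> real \<Rightarrow> nat \<Rightarrow> real" where
  "V 0 t k = (if k = 0 then exp (Lam * t) * \<psi> t else 0)"
| "V (Suc n) t k = (if k = 0 then exp (Lam * t) * \<psi> t
     else s0 k + integral {0..t} (\<lambda>\<tau>. P \<tau> (V n \<tau>) k))"

lemma V_cont: "continuous_on {0..T} (\<lambda>t. V n t k)"
proof (induction n arbitrary: k)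
  case 0
  then show ?case by (cases "k = 0") (auto intro!: continuous_intros psi_cont)
next
  case (Suc n)
  show ?case
  proof (cases "k = 0")
    case True
    then show ?thesis by (auto intro!: continuous_intros psi_cont)
  next
    case False
    have "continuous_on {0..T} (\<lambda>t. integral {0..t} (\<lambda>\<tau>. P \<tau> (V n \<tau>) k))"
      by (intro indefinite_integral_continuous_1 integrable_continuous_interval P_cont Suc.IH)
    then show ?thesis using False by (auto intro!: continuous_intros)
  qed
qed

lemma V_int: "t \<le> T \<Longrightarrow> (\<lambda>\<tau>. P \<tau> (V n \<tau>) k) integrable_on {0..t}"
  by (rule integrable_on_subinterval[OF integrable_continuous_interval[OF P_cont[OF V_cont]]]) auto

lemma V_bds: "t \<in> {0..T} \<Longrightarrow> 0 \<le> V n t k \<and> V n t k \<le> \<eta> * exp (Lam * t)"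
proof (induction n arbitrary: t k)
  case 0
  then show ?case using psi_bds[OF 0] by (auto simp: mult_left_mono mult.commute)
next
  case (Suc n)
  show ?case
  proof (cases "k = 0")
    case True
    then show ?thesis using psi_bds[OF Suc.prems] by (auto simp: mult_left_mono mult.commute)
  next
    case False
    have tT: "0 \<le> t" "t \<le> T" using Suc.prems by auto
    have pb: "0 \<le> P \<tau> (V n \<tau>) k \<and> P \<tau> (V n \<tau>) k \<le> Lam * \<eta> * exp (Lam * \<tau>)" if "\<tau> \<in> {0..t}" for \<tau>
    proof -
      have tt: "\<tau> \<in> {0..T}" using that tT by auto
      from P_bds[OF tt, of "V n \<tau>" "\<eta> * exp (Lam * \<tau>)" k] Suc.IH[OF tt]
      show ?thesis by (auto simp: mult.assoc)
    qed
    have i0: "0 \<le> integral {0..t} (\<lambda>\<tau>. P \<tau> (V n \<tau>) k)"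
      using integral_nonneg[OF V_int[OF tT(2)]] pb by auto
    have i1: "integral {0..t} (\<lambda>\<tau>. P \<tau> (V n \<tau>) k) \<le> \<eta> * exp (Lam * t) - \<eta>"
      using integral_le[OF V_int[OF tT(2)] has_integral_integrable[OF exp_int[OF tT(1)]]] pb
        integral_unique[OF exp_int[OF tT(1)]] by auto
    have "0 \<le> \<eta> * exp (Lam * t)" using eta by simp
    then show ?thesis using False i0 i1 s0_bds[of k] by auto
  qed
qed

lemma V_mono: "t \<in> {0..T} \<Longrightarrow> V n t k \<le> V (Suc n) t k"
proof (induction n arbitrary: t k)
  case 0
  then show ?case using V_bds[OF 0, of "Suc 0" k] by auto
next
  case (Suc n)
  show ?case
  proof (cases "k = 0")
    case True
    then show ?thesis by simp
  next
    case False
    have tT: "0 \<le> t" "t \<le> T" using Suc.prems by auto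
    have "integral {0..t} (\<lambda>\<tau>. P \<tau> (V n \<tau>) k) \<le> integral {0..t} (\<lambda>\<tau>. P \<tau> (V (Suc n) \<tau>) k)"
    proof (rule integral_le[OF V_int[OF tT(2)] V_int[OF tT(2)]])
      fix \<tau> assume "\<tau> \<in> {0..t}"
      then have tt: "\<tau> \<in> {0..T}" using tT by auto
      show "P \<tau> (V n \<tau>) k \<le> P \<tau> (V (Suc n) \<tau>) k"
        by (rule P_mono[OF tt]) (rule Suc.IH[OF tt])
    qed
    then show ?thesis using False by simp
  qed
qed

end


context lsetup begin

definition "vv t k = (if k = 0 then exp (Lam * t) * \<psi> t else (SUP n. V n t k))"

lemma V_lim: "t \<in> {0..T} \<Longrightarrow> (\<lambda>n. V n t k) \<longlonglongrightarrow> vv t k"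
proof (cases "k = 0")
  case True
  have "V n t k = exp (Lam * t) * \<psi> t" for n using True by (cases n) auto
  then show ?thesis using True by (simp add: vv_def)
next
  case False
  assume tT: "t \<in> {0..T}"
  have "(\<lambda>n. V n t k) \<longlonglongrightarrow> (SUP n. V n t k)"
  proof (rule LIMSEQ_incseq_SUP)
    show "bdd_above (range (\<lambda>n. V n t k))"
      using V_bds[OF tT] by (intro bdd_aboveI[of _ "\<eta> * exp (Lam * t)"]) auto
    show "incseq (\<lambda>n. V n t k)" using V_mono[OF tT] by (intro incseq_SucI) auto
  qed
  then show ?thesis using False by (simp add: vv_def)
qed

lemma vv_bds: "t \<in> {0..T} \<Longrightarrow> 0 \<le> vv t k \<and> vv t k \<le> \<eta> * exp (Lam * t)"
proof -
  assume tT: "t \<in> {0..T}"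
  have "0 \<le> vv t k" by (rule LIMSEQ_le_const[OF V_lim[OF tT]]) (use V_bds[OF tT] in auto)
  moreover have "vv t k \<le> \<eta> * exp (Lam * t)"
    by (rule LIMSEQ_le_const2[OF V_lim[OF tT]]) (use V_bds[OF tT] in auto)
  ultimately show ?thesis by auto
qed

lemma vv_int_eq:
  assumes tT: "t \<in> {0..T}" and k: "k \<noteq> 0"
  shows "(\<lambda>\<tau>. P \<tau> (vv \<tau>) k) integrable_on {0..t}"
    "vv t k = s0 k + integral {0..t} (\<lambda>\<tau>. P \<tau> (vv \<tau>) k)"
proof -
  have t: "0 \<le> t" "t \<le> T" using tT by auto
  have le: "norm (P \<tau> (V n \<tau>) k) \<le> Lam * \<eta> * exp (Lam * T)" if "\<tau> \<in> {0..t}" for n \<tau>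
  proof -
    have tt: "\<tau> \<in> {0..T}" using that t by auto
    from P_bds[OF tt, of "V n \<tau>" "\<eta> * exp (Lam * \<tau>)" k] V_bds[OF tt]
    have "0 \<le> P \<tau> (V n \<tau>) k" "P \<tau> (V n \<tau>) k \<le> Lam * (\<eta> * exp (Lam * \<tau>))" by auto
    moreover have "Lam * (\<eta> * exp (Lam * \<tau>)) \<le> Lam * \<eta> * exp (Lam * T)"
      using Lam_pos eta tt by (simp add: mult_left_mono)
    ultimately show ?thesis by simp
  qed
  have conv: "(\<lambda>n. P \<tau> (V n \<tau>) k) \<longlonglongrightarrow> P \<tau> (vv \<tau>) k" if "\<tau> \<in> {0..t}" for \<tau>
  proof -
    have tt: "\<tau> \<in> {0..T}" using that t by auto
    show ?thesis unfolding P_def by (intro tendsto_intros V_lim[OF tt])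
  qed
  note dc = dominated_convergence[of "\<lambda>n \<tau>. P \<tau> (V n \<tau>) k" "{0..t}" "\<lambda>\<tau>. Lam * \<eta> * exp (Lam * T)",
      OF V_int[OF t(2)] integrable_const_ivl le conv]
  show "(\<lambda>\<tau>. P \<tau> (vv \<tau>) k) integrable_on {0..t}" using dc(1) .
  have "(\<lambda>n. s0 k + integral {0..t} (\<lambda>\<tau>. P \<tau> (V n \<tau>) k)) \<longlonglongrightarrow> s0 k + integral {0..t} (\<lambda>\<tau>. P \<tau> (vv \<tau>) k)"
    by (intro tendsto_add tendsto_const dc(2))
  then have "(\<lambda>n. V (Suc n) t k) \<longlonglongrightarrow> s0 k + integral {0..t} (\<lambda>\<tau>. P \<tau> (vv \<tau>) k)"
    using k by simp
  moreover have "(\<lambda>n. V (Suc n) t k) \<longlonglongrightarrow> vv t k"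
    using V_lim[OF tT] by (rule LIMSEQ_Suc)
  ultimately show "vv t k = s0 k + integral {0..t} (\<lambda>\<tau>. P \<tau> (vv \<tau>) k)"
    using LIMSEQ_unique by blast
qed

lemma vv_cont: "continuous_on {0..T} (\<lambda>t. vv t k)"
proof (cases "k = 0")
  case True
  then show ?thesis unfolding vv_def by (auto intro!: continuous_intros psi_cont)
next
  case False
  have TT: "T \<in> {0..T}" using T by auto
  have "continuous_on {0..T} (\<lambda>t. s0 k + integral {0..t} (\<lambda>\<tau>. P \<tau> (vv \<tau>) k))"
    by (intro continuous_intros indefinite_integral_continuous_1 vv_int_eq[OF TT False])
  then show ?thesis
    by (rule continuous_on_eq) (use vv_int_eq(2)[OF _ False] in auto)
qed

lemma vv_deriv:
  assumes tT: "t \<in> {0..T}" and k: "k \<noteq> 0"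
  shows "((\<lambda>\<tau>. vv \<tau> k) has_real_derivative P t (vv t) k) (at t within {0..T})"
proof -
  have "((\<lambda>x. s0 k + integral {0..x} (\<lambda>\<tau>. P \<tau> (vv \<tau>) k)) has_real_derivative (0 + P t (vv t) k))
     (at t within {0..T})"
    by (intro DERIV_add DERIV_const integral_has_real_derivative P_cont vv_cont tT)
  then have "((\<lambda>x. s0 k + integral {0..x} (\<lambda>\<tau>. P \<tau> (vv \<tau>) k)) has_real_derivative P t (vv t) k)
     (at t within {0..T})" by simp
  then show ?thesis
    by (rule has_field_derivative_transform_within[of _ _ _ _ 1]) (use tT vv_int_eq(2)[OF _ k] in auto)
qed

definition "sol t k = exp (- (Lam * t)) * vv t k"

lemma sol0: "sol t 0 = \<psi> t"
  unfolding sol_def vv_def by (simp add: exp_minus field_simps)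

lemma sol_deriv:
  assumes tT: "t \<in> {0..T}" and k: "k \<noteq> 0"
  shows "((\<lambda>\<tau>. sol \<tau> k) has_real_derivative
     (al t k * sol t (k-1) + be t k * sol t k + ga t k * sol t (k+1))) (at t within {0..T})"
proof -
  have "((\<lambda>\<tau>. exp (- (Lam * \<tau>)) * vv \<tau> k) has_real_derivative
     (exp (- (Lam * t)) * (- Lam) * vv t k + exp (- (Lam * t)) * P t (vv t) k)) (at t within {0..T})"
    by (rule derivative_eq_intros vv_deriv[OF tT k] refl | simp)+
  moreover have "exp (- (Lam * t)) * (- Lam) * vv t k + exp (- (Lam * t)) * P t (vv t) k
      = al t k * sol t (k-1) + be t k * sol t k + ga t k * sol t (k+1)"
    unfolding P_def sol_def by (simp add: algebra_simps)
  ultimately show ?thesis unfolding sol_def by simp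
qed

end


context lsetup begin

lemma Gt: "lin_g 1 B lam c0 f t = G t"
  by (simp add: G_def fun_eq_iff)

lemma rhs_eq':
  "Lap h u k + b_coef 1 B (lin_g 1 B lam c0 f t k) * (Dp h (lin_g 1 B lam c0 f t) k * Dp h u k
       + Dm h (lin_g 1 B lam c0 f t) k * Dm h u k)
     + gamma_coef lam (lin_g 1 B lam c0 f t k) * u k * (B * f t k - 1)
   = al t k * u (k-1) + be t k * u k + ga t k * u (k+1)"
  unfolding Gt bb_def[symmetric] by (rule rhs_eq)

lemma existence:
  "is_lin_solution h 1 B lam T \<psi> s0 c0 f sol \<and> bounded_on_T T sol \<and>
   (\<forall>t\<in>{0..T}. \<forall>k\<ge>1. 0 \<le> sol t k \<and> sol t k \<le> \<eta>)"
proof -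
  have bds: "0 \<le> sol t k \<and> sol t k \<le> \<eta>" if "t \<in> {0..T}" for t k
  proof -
    from vv_bds[OF that, of k] have "0 \<le> vv t k" "vv t k \<le> \<eta> * exp (Lam * t)" by auto
    then have "exp (- (Lam * t)) * vv t k \<le> exp (- (Lam * t)) * (\<eta> * exp (Lam * t))"
      "0 \<le> exp (- (Lam * t)) * vv t k" by (auto intro: mult_left_mono)
    moreover have "exp (- (Lam * t)) * (\<eta> * exp (Lam * t)) = \<eta>" by (simp add: exp_minus)
    ultimately show ?thesis unfolding sol_def by auto
  qed
  have "is_lin_solution h 1 B lam T \<psi> s0 c0 f sol"
    unfolding is_lin_solution_def
  proof (intro conjI allI impI ballI)
    fix k :: nat
    show "continuous_on {0..T} (\<lambda>t. sol t k)"
      unfolding sol_def by (intro continuous_intros vv_cont)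
  next
    fix k :: nat and t assume k: "1 \<le> k" and t: "t \<in> {0<..T}"
    then have tT: "t \<in> {0..T}" and k0: "k \<noteq> 0" by auto
    show "((\<lambda>\<tau>. sol \<tau> k) has_real_derivative
        (Lap h (sol t) k + b_coef 1 B (lin_g 1 B lam c0 f t k) * (Dp h (lin_g 1 B lam c0 f t) k * Dp h (sol t) k
       + Dm h (lin_g 1 B lam c0 f t) k * Dm h (sol t) k)
     + gamma_coef lam (lin_g 1 B lam c0 f t k) * sol t k * (B * f t k - 1))) (at t within {0..T})"
      unfolding rhs_eq' by (rule sol_deriv[OF tT k0])
  next
    fix k :: nat assume k: "1 \<le> k"
    have "0 \<in> {0..T}" using T by auto
    from vv_int_eq(2)[OF this, of k] k show "sol 0 k = s0 k" unfolding sol_def by simp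
  next
    fix t show "sol t 0 = \<psi> t" by (rule sol0)
  qed
  moreover have "bounded_on_T T sol"
    unfolding bounded_on_T_def
  proof (intro exI ballI allI)
    fix t k assume tT: "t \<in> {0..T}"
    show "\<bar>sol t k\<bar> \<le> \<eta>" using bds[OF tT, of k] by auto
  qed
  ultimately show ?thesis using bds by auto
qed

lemma existence':
  "\<exists>s. is_lin_solution h 1 B lam T \<psi> s0 c0 f s \<and> bounded_on_T T s \<and>
   (\<forall>t\<in>{0..T}. \<forall>k\<ge>1. 0 \<le> s t k \<and> s t k \<le> \<eta>)"
  using existence by (intro exI[of _ sol])

lemma uniqueness:
  assumes s1: "is_lin_solution h 1 B lam T \<psi> s0 c0 f s1" "bounded_on_T T s1"
    and s2: "is_lin_solution h 1 B lam T \<psi> s0 c0 f s2" "bounded_on_T T s2"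
  shows "\<forall>t\<in>{0..T}. \<forall>k. s1 t k = s2 t k"
proof -
  define w where "w t k = s1 t k - s2 t k" for t k
  have wd: "((\<lambda>\<tau>. w \<tau> k) has_real_derivative (al t k * w t (k-1) + be t k * w t k + ga t k * w t (k+1)))
      (at t within {0..T})" if "1 \<le> k" "t \<in> {0<..T}" for k t
  proof -
    from s1(1) that have d1: "((\<lambda>\<tau>. s1 \<tau> k) has_real_derivative (al t k * s1 t (k-1) + be t k * s1 t k + ga t k * s1 t (k+1)))
      (at t within {0..T})" unfolding is_lin_solution_def rhs_eq' by blast
    from s2(1) that have d2: "((\<lambda>\<tau>. s2 \<tau> k) has_real_derivative (al t k * s2 t (k-1) + be t k * s2 t k + ga t k * s2 t (k+1)))
      (at t within {0..T})" unfolding is_lin_solution_def rhs_eq' by blast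
    show ?thesis using DERIV_diff[OF d1 d2] unfolding w_def by (simp add: algebra_simps)
  qed
  have wc: "continuous_on {0..T} (\<lambda>t. w t k)" if "1 \<le> k" for k
    using s1(1) s2(1) that unfolding is_lin_solution_def w_def by (auto intro!: continuous_intros)
  have wb: "w t 0 = 0" if "t \<in> {0..T}" for t
    using s1(1) s2(1) that unfolding is_lin_solution_def w_def by auto
  have w0: "w 0 k = 0" for k
  proof (cases "k = 0")
    case True then show ?thesis using wb T by auto
  next
    case False then show ?thesis using s1(1) s2(1) unfolding is_lin_solution_def w_def by auto
  qed
  obtain M1 where M1: "\<forall>t\<in>{0..T}. \<forall>k. \<bar>s1 t k\<bar> \<le> M1" using s1(2) unfolding bounded_on_T_def by auto
  obtain M2 where M2: "\<forall>t\<in>{0..T}. \<forall>k. \<bar>s2 t k\<bar> \<le> M2" using s2(2) unfolding bounded_on_T_def by auto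
  define M where "M = M1 + M2"
  have wM: "\<bar>w t k\<bar> \<le> M" if "t \<in> {0..T}" for t k
    using M1 M2 that unfolding w_def M_def by (meson abs_triangle_ineq4 add_mono order_trans)
  have M0: "0 \<le> M" using wM[of 0 0] T by auto
  define \<delta> where "\<delta> = 1 / (6 * Lam)"
  have dpos: "0 < \<delta>" using Lam_pos by (simp add: \<delta>_def)
  have dbound: "\<bar>al z k * u (k-1) + be z k * u k + ga z k * u (k+1)\<bar> \<le> 3 * Lam * X"
    if "z \<in> {0..T}" "\<And>j. \<bar>u j\<bar> \<le> X" for z k u X
  proof -
    note cb = coef_bds[OF that(1), of k]
    have "\<bar>al z k * u (k-1)\<bar> \<le> Lam * X" unfolding abs_mult
      using cb that(2)[of "k-1"] by (intro mult_mono) auto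
    moreover have "\<bar>be z k * u k\<bar> \<le> Lam * X" unfolding abs_mult
      using cb that(2)[of "k"] by (intro mult_mono) auto
    moreover have "\<bar>ga z k * u (k+1)\<bar> \<le> Lam * X" unfolding abs_mult
      using cb that(2)[of "k+1"] by (intro mult_mono) auto
    ultimately show ?thesis by linarith
  qed
  have step: "\<forall>t\<in>{0..T}. t \<le> t0 + \<delta> \<longrightarrow> (\<forall>k. w t k = 0)"
    if t0: "0 \<le> t0" and hyp: "\<forall>t\<in>{0..T}. t \<le> t0 \<longrightarrow> (\<forall>k. w t k = 0)" for t0
  proof -
    have inner: "\<forall>t\<in>{0..T}. t \<le> t0 + \<delta> \<longrightarrow> (\<forall>k. \<bar>w t k\<bar> \<le> M * (1/2)^n)" for n
    proof (induction n)
      case 0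
      then show ?case using wM by simp
    next
      case (Suc n)
      show ?case
      proof (intro ballI impI allI)
        fix t k assume tT: "t \<in> {0..T}" and tle: "t \<le> t0 + \<delta>"
        show "\<bar>w t k\<bar> \<le> M * (1/2) ^ Suc n"
        proof (cases "t \<le> t0 \<or> k = 0")
          case True
          have "0 \<le> M" using wM[of 0 0] T by auto
          then have "0 \<le> M * (1/2) ^ Suc n" by simp
          then show ?thesis using True hyp tT wb by auto
        next
          case False
          then have tt: "t0 < t" and k: "1 \<le> k" by auto
          have cont: "continuous_on {t0..t} (\<lambda>\<tau>. w \<tau> k)"
            by (rule continuous_on_subset[OF wc[OF k]]) (use t0 tT in auto)
          have dat: "((\<lambda>\<tau>. w \<tau> k) has_real_derivative (al x k * w x (k-1) + be x k * w x k + ga x k * w x (k+1)))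
              (at x)" if "t0 < x" "x < t" for x
          proof -
            have "x \<in> interior {0..T}" using that t0 tT by auto
            then have "at x within {0..T} = at x" by (rule at_within_interior)
            with wd[OF k, of x] that t0 tT show ?thesis by auto
          qed
          obtain l z where z: "t0 < z" "z < t" and dz: "((\<lambda>\<tau>. w \<tau> k) has_real_derivative l) (at z)"
            and eq: "w t k - w t0 k = (t - t0) * l"
            using MVT[OF tt cont] dat by (meson real_differentiable_def)
          have l: "l = al z k * w z (k-1) + be z k * w z k + ga z k * w z (k+1)"
            using DERIV_unique[OF dz dat[OF z]] .
          have zT: "z \<in> {0..T}" using z t0 tT by auto
          have "\<bar>l\<bar> \<le> 3 * Lam * (M * (1/2)^n)"
            unfolding l by (rule dbound[OF zT]) (use Suc.IH zT z tle in auto)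
          moreover have "w t0 k = 0" using hyp t0 tt tT by auto
          ultimately have "\<bar>w t k\<bar> \<le> (t - t0) * (3 * Lam * (M * (1/2)^n))"
            using eq tt by (simp add: abs_mult mult_left_mono)
          also have "\<dots> \<le> \<delta> * (3 * Lam * (M * (1/2)^n))"
            using tle M0 Lam_pos by (intro mult_right_mono) auto
          also have "\<dots> = M * (1/2) ^ Suc n" unfolding \<delta>_def using Lam_pos by simp
          finally show ?thesis .
        qed
      qed
    qed
    show ?thesis
    proof (intro ballI impI allI)
      fix t k assume "t \<in> {0..T}" "t \<le> t0 + \<delta>"
      then have b: "\<bar>w t k\<bar> \<le> M * (1/2)^n" for n using inner by auto
      have "(\<lambda>n. M * (1/2::real)^n) \<longlonglongrightarrow> 0"
        by (intro tendsto_mult_right_zero LIMSEQ_realpow_zero) auto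
      then have "\<bar>w t k\<bar> \<le> 0" by (rule LIMSEQ_le_const) (use b in auto)
      then show "w t k = 0" by simp
    qed
  qed
  have all: "\<forall>t\<in>{0..T}. t \<le> real m * \<delta> \<longrightarrow> (\<forall>k. w t k = 0)" for m
  proof (induction m)
    case 0
    then show ?case using w0 by auto
  next
    case (Suc m)
    have "\<forall>t\<in>{0..T}. t \<le> real m * \<delta> + \<delta> \<longrightarrow> (\<forall>k. w t k = 0)"
      by (rule step) (use Suc.IH dpos in auto)
    then show ?case by (simp add: algebra_simps)
  qed
  show ?thesis
  proof (intro ballI allI)
    fix t k assume tT: "t \<in> {0..T}"
    obtain m :: nat where "t / \<delta> \<le> real m" using real_arch_simple by blast
    then have "t \<le> real m * \<delta>" using dpos by (simp add: divide_le_eq)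
    with all[of m] tT have "w t k = 0" by auto
    then show "s1 t k = s2 t k" unfolding w_def by simp
  qed
qed

end


lemma L2_comp:
  fixes u v :: "nat \<Rightarrow> real"
  assumes h: "0 < h" and u: "in_L2 u" and v: "in_L2 v" and k: "1 \<le> k"
  shows "\<bar>u k - v k\<bar> \<le> L2norm h (\<lambda>i. u i - v i) / sqrt h"
proof -
  define d where "d i = u i - v i" for i
  have sq: "(a - b)^2 \<le> 2 * a^2 + 2 * b^2" for a b :: real
  proof -
    have "0 \<le> (a + b)^2" by simp
    then show ?thesis unfolding power2_diff power2_sum by linarith
  qed
  have sm: "summable (\<lambda>i. (d (Suc i))^2)"
  proof (rule summable_comparison_test)
    show "\<exists>N. \<forall>n\<ge>N. norm ((d (Suc n))^2) \<le> 2 * (u (Suc n))^2 + 2 * (v (Suc n))^2"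
      unfolding d_def using sq by auto
    show "summable (\<lambda>n. 2 * (u (Suc n))^2 + 2 * (v (Suc n))^2)"
      using u v unfolding in_L2_def by (intro summable_add summable_mult) auto
  qed
  have kk: "k = Suc (k - 1)" using k by simp
  have "sum (\<lambda>i. (d (Suc i))^2) {k-1} \<le> (\<Sum>i. (d (Suc i))^2)"
    by (rule sum_le_suminf[OF sm]) auto
  then have "(d k)^2 \<le> (\<Sum>i. (d (Suc i))^2)"
    using kk by simp
  then have "h * (d k)^2 \<le> h * (\<Sum>i. (d (Suc i))^2)" using h by simp
  then have "sqrt (h * (d k)^2) \<le> L2norm h d" unfolding L2norm_def by simp
  moreover have "sqrt (h * (d k)^2) = sqrt h * \<bar>d k\<bar>" by (simp add: real_sqrt_mult)
  ultimately have "sqrt h * \<bar>d k\<bar> \<le> L2norm h d" by simp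
  then have "\<bar>d k\<bar> \<le> L2norm h d / sqrt h" using h by (simp add: le_divide_eq mult.commute)
  then show ?thesis unfolding d_def by (simp add: d_def[abs_def])
qed

lemma f_cont_lemma:
  assumes h: "0 < h" and F: "cond_F h T \<eta> \<psi> K f" and psi: "continuous_on {0..T} \<psi>"
  shows "continuous_on {0..T} (\<lambda>t. f t k)"
proof (cases "k = 0")
  case True
  have f0: "\<forall>t\<in>{0..T}. f t 0 = \<psi> t" using F unfolding cond_F_def by auto
  show ?thesis using continuous_on_eq[OF psi, of "\<lambda>t. f t k"] f0 True by auto
next
  case False
  then have k: "1 \<le> k" by simp
  have L2: "\<forall>t\<in>{0..T}. in_L2 (f t)" and lim:
    "\<forall>t\<in>{0..T}. ((\<lambda>\<tau>. L2norm h (\<lambda>k. f \<tau> k - f t k)) \<longlongrightarrow> 0) (at t within {0..T})"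
    using F unfolding cond_F_def by auto
  show ?thesis unfolding continuous_on_def
  proof
    fix t assume tT: "t \<in> {0..T}"
    have "((\<lambda>\<tau>. f \<tau> k - f t k) \<longlongrightarrow> 0) (at t within {0..T})"
    proof (rule Lim_null_comparison)
      show "\<forall>\<^sub>F \<tau> in at t within {0..T}. norm (f \<tau> k - f t k) \<le> L2norm h (\<lambda>k. f \<tau> k - f t k) / sqrt h"
        unfolding eventually_at_filter
        by (rule always_eventually) (use L2_comp[OF h _ _ k] L2 tT in auto)
      show "((\<lambda>\<tau>. L2norm h (\<lambda>k. f \<tau> k - f t k) / sqrt h) \<longlongrightarrow> 0) (at t within {0..T})"
        using tendsto_divide[OF lim[rule_format, OF tT] tendsto_const, of "sqrt h"] h by simp
    qed
    then show "((\<lambda>\<tau>. f \<tau> k) \<longlongrightarrow> f t k) (at t within {0..T})"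
      by (simp add: LIM_zero_iff)
  qed
qed

theorem mainTheorem7:
  fixes h A B lam T \<eta> \<beta> cm C0 \<phi>min \<phi>max K :: real
    and \<psi> :: "real \<Rightarrow> real" and s0 c0 :: "nat \<Rightarrow> real" and f :: "real \<Rightarrow> nat \<Rightarrow> real"
  assumes h: "h > 0"
    and A: "A = 1" and B: "B = -1 \<or> B = 1"
    and lam: "lam > 0" and T: "T > 0" and eta: "\<eta> > 0"
    and beta: "1/4 < \<beta>" "\<beta> < 1/2"
    and psi_holder: "holder_on \<beta> {0..T} \<psi>" and psi_cont: "continuous_on {0..T} \<psi>"
    and psi_bds: "\<forall>t\<in>{0..T}. 0 \<le> \<psi> t \<and> \<psi> t \<le> \<eta>" and psi0: "\<psi> 0 = 0"
    and s0_bds: "\<forall>k. 0 \<le> s0 k \<and> s0 k \<le> \<eta>" and s0_0: "s0 0 = 0"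
    and s0_L2: "in_L2 s0" "in_L2 (Dp h s0)"
    and c0_bds: "0 < cm" "\<forall>k. cm \<le> c0 k \<and> c0 k \<le> C0"
    and c0_L2: "in_L2 (\<lambda>k. C0 - c0 k)" "in_L2 (Dp h c0)"
    and phi_bds: "0 < \<phi>min" "\<phi>min \<le> \<phi>max"
      "\<forall>c\<in>{0..C0}. \<phi>min \<le> phi A B c \<and> phi A B c \<le> \<phi>max"
    and eta_lt: "B = 1 \<longrightarrow> \<eta> < 1"
    and K: "K > 0" and F: "cond_F h T \<eta> \<psi> K f"
  shows "(\<exists>s. is_lin_solution h A B lam T \<psi> s0 c0 f s \<and> bounded_on_T T s \<and>
              (\<forall>t\<in>{0..T}. \<forall>k\<ge>1. 0 \<le> s t k \<and> s t k \<le> \<eta>)) \<and>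
         (\<forall>s1 s2. is_lin_solution h A B lam T \<psi> s0 c0 f s1 \<and> bounded_on_T T s1 \<and>
                  is_lin_solution h A B lam T \<psi> s0 c0 f s2 \<and> bounded_on_T T s2 \<longrightarrow>
                  (\<forall>t\<in>{0..T}. \<forall>k. s1 t k = s2 t k))"
proof -
  have Fl: "(\<forall>t\<in>{0..T}. \<forall>k. 0 \<le> f t k) \<and> (\<forall>t\<in>{0..T}. f t 0 = \<psi> t) \<and> (\<forall>t\<in>{0..T}. \<forall>k. f t k \<le> \<eta>)"
    using F unfolding cond_F_def by (elim conjE) (intro conjI; assumption)
  define p where "p = min 1 \<phi>min"
  have ls: "lsetup h B lam T \<eta> p C0 \<psi> s0 c0 f"
  proof (rule lsetup.intro)
    show "0 < h" "B = 1 \<or> B = -1" "0 < lam" "0 < T" "0 < \<eta>" using h B lam T eta by auto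
    show "0 < p" "p \<le> 1" using phi_bds(1) by (auto simp: p_def)
    show "continuous_on {0..T} \<psi>" by (rule psi_cont)
    show "\<And>t. t \<in> {0..T} \<Longrightarrow> 0 \<le> \<psi> t \<and> \<psi> t \<le> \<eta>" using psi_bds by auto
    show "\<And>k. 0 \<le> s0 k \<and> s0 k \<le> \<eta>" using s0_bds by auto
    show "\<And>k. 0 < c0 k \<and> c0 k \<le> C0" using c0_bds by (meson less_le_trans)
    show "\<And>k. B = -1 \<Longrightarrow> p \<le> 1 - c0 k"
    proof -
      fix k assume Bm: "B = -1"
      have "c0 k \<in> {0..C0}" using c0_bds by (meson atLeastAtMost_iff less_le_trans less_imp_le)
      with phi_bds(3) have "\<phi>min \<le> phi A B (c0 k)" by auto
      then show "p \<le> 1 - c0 k" using Bm A unfolding phi_def p_def by auto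
    qed
    show "B = 1 \<Longrightarrow> \<eta> < 1" using eta_lt by auto
    show "\<And>k. continuous_on {0..T} (\<lambda>t. f t k)" by (rule f_cont_lemma[OF h F psi_cont])
    show "\<And>t k. t \<in> {0..T} \<Longrightarrow> 0 \<le> f t k \<and> f t k \<le> \<eta>" using Fl by blast
    show "\<And>t. t \<in> {0..T} \<Longrightarrow> f t 0 = \<psi> t" using Fl by blast
  qed
  show ?thesis
    unfolding A
  proof (intro conjI allI impI)
    show "\<exists>s. is_lin_solution h 1 B lam T \<psi> s0 c0 f s \<and> bounded_on_T T s \<and>
              (\<forall>t\<in>{0..T}. \<forall>k\<ge>1. 0 \<le> s t k \<and> s t k \<le> \<eta>)"
      by (rule lsetup.existence'[OF ls])
  next
    fix s1 s2
    assume "is_lin_solution h 1 B lam T \<psi> s0 c0 f s1 \<and> bounded_on_T T s1 \<and>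
                  is_lin_solution h 1 B lam T \<psi> s0 c0 f s2 \<and> bounded_on_T T s2"
    then show "\<forall>t\<in>{0..T}. \<forall>k. s1 t k = s2 t k"
      by (elim conjE) (rule lsetup.uniqueness[OF ls])
  qed
qed


end
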